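(* For any history $\mathcal{F}_{t-1}$, conditioned on the event $E^f(t)$, \[ \mathbb{P}\big(\mathbf{x}_t\in\mathcal{X}\setminus S_t\mid\mathcal{F}_{t-1}\big)\ge p-1/t^2,\qquad p=\frac{1}{4e\sqrt{\pi}}. \]
   Context: $\mathcal{X}$ is a finite subset of the unit ball of $\mathbb{R}^d$; $f\sim\mathcal{GP}(0,k)$ with $k$ the NTK; observations $y=f(\mathbf{x})+\zeta$, $\zeta\sim\mathcal{N}(0,\sigma^2)$. Queries indexed sequentially; $\mathrm{fb}[t]$ is the largest index whose observation is available when $\mathbf{x}_t$ is chosen ($t-\mathrm{fb}[t]\le B$). $\mu_{\mathrm{fb}[t]},\sigma_{\mathrm{fb}[t]}$: GP posterior mean/std given observations $1,\dots,\mathrm{fb}[t]$; $\mathcal{F}_{t-1}$ the collected inputs/outputs plus pending inputs $\mathbf{x}_{\mathrm{fb}[t]+1},\dots,\mathbf{x}_{t-1}$. $\beta_t=2\log(\pi^2t^2|\mathcal{X}|/(3\delta))$, $c_t=\beta_t(1+\sqrt{2\log(|\mathcal{X}|t^2)})$. Given $\mathcal{F}_{t-1}$, $f_t\sim\mathcal{GP}(\mu_{\mathrm{fb}[t]},\beta_t^2\sigma^2_{\mathrm{fb}[t]})$ and $\mathbf{x}_t=\arg\max_{\mathbf{x}\in\mathcal{X}}f_t(\mathbf{x})$. $E^f(t)$: $|\mu_{\mathrm{fb}[t]}(\mathbf{x})-f(\mathbf{x})|\le\beta_t\sigma_{\mathrm{fb}[t]}(\mathbf{x})$ for all $\mathbf{x}$.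 With $\mathbf{x}^*$ a maximizer of $f$ and $\Delta(\mathbf{x})=f(\mathbf{x}^* )-f(\mathbf{x})$, the saturated set is $S_t=\{\mathbf{x}\in\mathcal{X}:\Delta(\mathbf{x})>c_t\sigma_{\mathrm{fb}[t]}(\mathbf{x})\}$. *)

theory Defs
  imports "HOL-Analysis.Analysis" "HOL-Probability.Probability"
begin

definition reg_gram_solve ::
  "('a \<Rightarrow> 'a \<Rightarrow> real) \<Rightarrow> real \<Rightarrow> 'a list \<Rightarrow> (nat \<Rightarrow> real) \<Rightarrow> (nat \<Rightarrow> real)" where
  "reg_gram_solve k s2 xs b =
     (THE a. (\<forall>i<length xs. (\<Sum>j<length xs. (k (xs!i) (xs!j) + (if i = j then s2 else 0)) * a j) = b i)
           \<and> (\<forall>i. length xs \<le> i \<longrightarrow> a i = 0))"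

definition post_mean ::
  "('a \<Rightarrow> 'a \<Rightarrow> real) \<Rightarrow> real \<Rightarrow> 'a list \<Rightarrow> real list \<Rightarrow> 'a \<Rightarrow> real" where
  "post_mean k s2 xs ys x =
     (\<Sum>i<length xs. k x (xs!i) * reg_gram_solve k s2 xs (\<lambda>j. ys!j) i)"

definition post_cov ::
  "('a \<Rightarrow> 'a \<Rightarrow> real) \<Rightarrow> real \<Rightarrow> 'a list \<Rightarrow> 'a \<Rightarrow> 'a \<Rightarrow> real" where
  "post_cov k s2 xs x x' =
     k x x' - (\<Sum>i<length xs. k x (xs!i) * reg_gram_solve k s2 xs (\<lambda>j. k (xs!j) x') i)"

definition post_sd ::
  "('a \<Rightarrow> 'a \<Rightarrow> real) \<Rightarrow> real \<Rightarrow> 'a list \<Rightarrow> 'a \<Rightarrow> real" where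
  "post_sd k s2 xs x = sqrt (post_cov k s2 xs x x)"

definition gaussian_rv :: "'s measure \<Rightarrow> ('s \<Rightarrow> real) \<Rightarrow> real \<Rightarrow> real \<Rightarrow> bool" where
  "gaussian_rv M Y m v \<longleftrightarrow> 0 \<le> v \<and> Y \<in> borel_measurable M \<and>
     (if v = 0 then (AE \<omega> in M. Y \<omega> = m)
      else distributed M lborel Y (normal_density m (sqrt v)))"

definition gaussian_process_on ::
  "'s measure \<Rightarrow> 'a set \<Rightarrow> ('s \<Rightarrow> 'a \<Rightarrow> real) \<Rightarrow> ('a \<Rightarrow> real) \<Rightarrow> ('a \<Rightarrow> 'a \<Rightarrow> real) \<Rightarrow> bool" where
  "gaussian_process_on M X F m C \<longleftrightarrow>
     (\<forall>a :: 'a \<Rightarrow> real. gaussian_rv M (\<lambda>\<omega>. \<Sum>x\<in>X. a x * F \<omega> x)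
        (\<Sum>x\<in>X. a x * m x) (\<Sum>x\<in>X. \<Sum>y\<in>X. a x * a y * C x y))"

definition psd_kernel_on :: "'a set \<Rightarrow> ('a \<Rightarrow> 'a \<Rightarrow> real) \<Rightarrow> bool" where
  "psd_kernel_on X k \<longleftrightarrow> (\<forall>x\<in>X. \<forall>y\<in>X. k x y = k y x) \<and>
     (\<forall>A a. finite A \<longrightarrow> A \<subseteq> X \<longrightarrow> 0 \<le> (\<Sum>x\<in>A. \<Sum>y\<in>A. a x * a y * k x y))"

definition beta_t :: "nat \<Rightarrow> nat \<Rightarrow> real \<Rightarrow> real" where
  "beta_t t N \<delta> = 2 * ln (pi^2 * real t^2 * real N / (3 * \<delta>))"

definition c_t :: "nat \<Rightarrow> nat \<Rightarrow> real \<Rightarrow> real" where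
  "c_t t N \<delta> = beta_t t N \<delta> * (1 + sqrt (2 * ln (real N * real t^2)))"

definition saturated_set ::
  "'a set \<Rightarrow> ('a \<Rightarrow> real) \<Rightarrow> 'a \<Rightarrow> real \<Rightarrow> ('a \<Rightarrow> real) \<Rightarrow> 'a set" where
  "saturated_set X f xstar c sd = {x \<in> X. f xstar - f x > c * sd x}"

end

theory Submission imports Defs "HOL-Real_Asymp.Real_Asymp" begin

lemma std_upper:
  assumes a: "0 < a"
  shows "(\<integral>\<^sup>+x. ennreal (std_normal_density x) * indicator {a..} x \<partial>lborel)
         \<le> ennreal (std_normal_density a / a)"
proof -
  have "(\<integral>\<^sup>+x. ennreal (std_normal_density x) * indicator {a..} x \<partial>lborel)
      \<le> (\<integral>\<^sup>+x. ennreal (x * std_normal_density x / a) * indicator {a..} x \<partial>lborel)"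
  proof (intro nn_integral_mono)
    fix x show "ennreal (std_normal_density x) * indicator {a..} x
        \<le> ennreal (x * std_normal_density x / a) * indicator {a..} x"
    proof (cases "a \<le> x")
      case True
      have "std_normal_density x \<le> x * std_normal_density x / a"
        using True a by (simp add: field_simps mult_right_mono)
      then show ?thesis using True by (simp add: ennreal_leI)
    qed simp
  qed
  also have "\<dots> = ennreal (0 - (- std_normal_density a / a))"
  proof (rule nn_integral_FTC_atLeast[where F="\<lambda>x. - std_normal_density x / a"])
    show "(\<lambda>x. x * std_normal_density x / a) \<in> borel_measurable borel" by measurable
    fix x assume "a \<le> x"
    show "0 \<le> x * std_normal_density x / a" using \<open>a \<le> x\<close> a by simp
  next
    fix x :: real
    show "((\<lambda>x. - std_normal_density x / a) has_real_derivative x * std_normal_density x / a) (at x)"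
      unfolding std_normal_density_def using a
      by (auto intro!: derivative_eq_intros simp: field_simps)
  next
    have "((\<lambda>x::real. exp (- x\<^sup>2 / 2)) \<longlongrightarrow> 0) at_top" by real_asymp
    then have "((\<lambda>x. - (1 / sqrt (2 * pi) * exp (- x\<^sup>2 / 2)) / a) \<longlongrightarrow> - (1 / sqrt (2 * pi) * 0) / a) at_top"
      using a by (intro tendsto_intros) auto
    then show "((\<lambda>x. - std_normal_density x / a) \<longlongrightarrow> 0) at_top"
      unfolding std_normal_density_def by simp
  qed
  finally show ?thesis by simp
qed

lemma std_lower:
  "(\<integral>\<^sup>+x. ennreal (std_normal_density x) * indicator {1..} x \<partial>lborel)
         \<ge> ennreal (std_normal_density 1 / 2)"
proof -
  define g where "g x = std_normal_density x * ((x^4 + 2*x^2 - 1) / (1 + x^2)^2)" for x :: real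
  have "ennreal (std_normal_density 1 / 2) = ennreal (0 - (- (1 * std_normal_density 1 / (1 + 1^2))))"
    by simp
  also have "\<dots> = (\<integral>\<^sup>+x. ennreal (g x) * indicator {1..} x \<partial>lborel)"
  proof (rule nn_integral_FTC_atLeast[symmetric, where F="\<lambda>x. - (x * std_normal_density x / (1 + x^2))"])
    show "g \<in> borel_measurable borel" unfolding g_def by measurable
    fix x :: real assume "1 \<le> x"
    then have "1 \<le> x^2" by (simp add: one_le_power)
    moreover have "1 \<le> x^4" using \<open>1 \<le> x\<close> by (simp add: one_le_power)
    ultimately have "0 \<le> x^4 + 2*x^2 - 1" by linarith
    then show "0 \<le> g x" unfolding g_def by simp
  next
    fix x :: real
    have p: "0 < 1 + x^2" by (smt (verit) zero_le_power2)
    have d1: "((\<lambda>x. x / (1+x^2)) has_real_derivative ((1 - x^2)/(1+x^2)^2)) (at x)"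
      using p by (auto intro!: derivative_eq_intros simp: field_simps power2_eq_square)
    have d2: "((\<lambda>x. exp (- x\<^sup>2 / 2)) has_real_derivative (exp (- x\<^sup>2 / 2) * (- x))) (at x)"
      by (auto intro!: derivative_eq_intros)
    have d3: "((\<lambda>x. - (1 / sqrt (2 * pi)) * (x / (1+x^2) * exp (- x\<^sup>2 / 2))) has_real_derivative
       (- (1 / sqrt (2 * pi)) * (x / (1+x^2) * (exp (- x\<^sup>2 / 2) * (- x)) + (1 - x^2)/(1+x^2)^2 * exp (- x\<^sup>2 / 2)))) (at x)"
      by (rule DERIV_cmult[OF DERIV_mult'[OF d1 d2]])
    have eq: "- (1 / sqrt (2 * pi)) * (x / (1+x^2) * (exp (- x\<^sup>2 / 2) * (- x)) + (1 - x^2)/(1+x^2)^2 * exp (- x\<^sup>2 / 2))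
       = g x"
    proof -
      have rid: "\<And>c E A B::real. - c * (A * (E * (- x)) + B * E) = c * E * (- (A * (- x) + B))"
        by algebra
      have "- (x / (1+x^2) * (- x) + (1 - x^2)/(1+x^2)^2) = (x^4 + 2*x^2 - 1) / (1 + x^2)^2"
        using p by (simp add: divide_simps) algebra
      moreover have "- (1 / sqrt (2 * pi)) * (x / (1+x^2) * (exp (- x\<^sup>2 / 2) * (- x)) + (1 - x^2)/(1+x^2)^2 * exp (- x\<^sup>2 / 2))
        = 1 / sqrt (2 * pi) * exp (- x\<^sup>2 / 2) * (- (x / (1+x^2) * (- x) + (1 - x^2)/(1+x^2)^2))"
        by (rule rid)
      ultimately show ?thesis unfolding g_def std_normal_density_def
        by simp
    qed
    show "((\<lambda>x. - (x * std_normal_density x / (1 + x^2))) has_real_derivative g x) (at x)"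
      using d3 unfolding eq std_normal_density_def by (simp add: field_simps)
  next
    show "((\<lambda>x. - (x * std_normal_density x / (1 + x^2))) \<longlongrightarrow> 0) at_top"
      unfolding std_normal_density_def by real_asymp
  qed
  also have "\<dots> \<le> (\<integral>\<^sup>+x. ennreal (std_normal_density x) * indicator {1..} x \<partial>lborel)"
  proof (intro nn_integral_mono)
    fix x show "ennreal (g x) * indicator {1..} x
        \<le> ennreal (std_normal_density x) * indicator {1..} x"
    proof (cases "1 \<le> x")
      case True
      have p: "0 < 1 + x^2" by (smt (verit) zero_le_power2)
      have sq: "(1+x^2)^2 = x^4+2*x^2+1" by algebra
      have "x^4 + 2*x^2 - 1 \<le> (1 + x^2)^2" unfolding sq by linarith
      moreover have "0 < (1 + x^2)^2" using p by simp
      ultimately have "(x^4 + 2*x^2 - 1) / (1 + x^2)^2 \<le> 1"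
        by (subst divide_le_eq_1_pos) auto
      then have "g x \<le> std_normal_density x" unfolding g_def
        using mult_left_le[of "(x^4 + 2*x^2 - 1) / (1 + x^2)^2" "std_normal_density x"] by simp
      then show ?thesis using True by (simp add: ennreal_leI)
    qed simp
  qed
  finally show ?thesis .
qed
lemma (in prob_space) gauss_upper:
  assumes g: "gaussian_rv M Y m v" and a: "1 \<le> a"
  shows "measure M {\<omega>\<in>space M. m + a * sqrt v < Y \<omega>} \<le> exp (- a\<^sup>2 / 2)"
proof -
  have v0: "0 \<le> v" and Ym: "Y \<in> borel_measurable M" using g unfolding gaussian_rv_def by auto
  have meas: "{\<omega>\<in>space M. m + a * sqrt v < Y \<omega>} \<in> sets M" using Ym by measurable
  show ?thesis
  proof (cases "v = 0")
    case True
    then have "AE \<omega> in M. Y \<omega> = m" using g unfolding gaussian_rv_def by auto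
    then have "AE \<omega> in M. \<not> (m + a * sqrt v < Y \<omega>)" using True by auto
    then have "measure M {\<omega>\<in>space M. m + a * sqrt v < Y \<omega>} = 0"
      by (rule prob_eq_0_AE)
    then show ?thesis by simp
  next
    case False
    define s where "s = sqrt v"
    have s: "0 < s" using False v0 unfolding s_def by simp
    have "distributed M lborel Y (normal_density m s)"
      using g False unfolding gaussian_rv_def s_def by auto
    then have Z: "distributed M lborel (\<lambda>\<omega>. (Y \<omega> - m) / s) std_normal_density"
      using normal_standard_normal_convert[OF s] by simp
    let ?Z = "\<lambda>\<omega>. (Y \<omega> - m) / s"
    have sub: "{\<omega>\<in>space M. m + a * sqrt v < Y \<omega>} \<subseteq> ?Z -` {a..} \<inter> space M"
      using s unfolding s_def[symmetric] by (auto simp: field_simps)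
    have meas2: "?Z -` {a..} \<inter> space M \<in> sets M" using Ym by measurable
    have "ennreal (measure M (?Z -` {a..} \<inter> space M)) = emeasure M (?Z -` {a..} \<inter> space M)"
      by (simp add: emeasure_eq_measure)
    also have "\<dots> = (\<integral>\<^sup>+x. ennreal (std_normal_density x) * indicator {a..} x \<partial>lborel)"
      by (rule distributed_emeasure[OF Z]) simp
    also have "\<dots> \<le> ennreal (std_normal_density a / a)"
      using a by (intro std_upper) simp
    finally have "measure M (?Z -` {a..} \<inter> space M) \<le> std_normal_density a / a"
      using a by (subst (asm) ennreal_le_iff) auto
    moreover have "std_normal_density a / a \<le> exp (- a\<^sup>2 / 2)"
    proof -
      have "1 \<le> sqrt (2 * pi)" using pi_gt3 by simp
      then have "1 \<le> sqrt (2 * pi) * a" using a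
        by (metis mult_mono' mult_1 zero_le_one)
      then show ?thesis unfolding std_normal_density_def using a
        by (simp add: field_simps mult_le_cancel_left1)
    qed
    moreover have "measure M {\<omega>\<in>space M. m + a * sqrt v < Y \<omega>} \<le> measure M (?Z -` {a..} \<inter> space M)"
      by (rule finite_measure_mono[OF sub meas2])
    ultimately show ?thesis by linarith
  qed
qed

lemma (in prob_space) gauss_lower:
  assumes g: "gaussian_rv M Y m v"
  shows "measure M {\<omega>\<in>space M. m + sqrt v \<le> Y \<omega>} \<ge> exp (- 1 / 2) / (2 * sqrt (2 * pi))"
proof -
  have v0: "0 \<le> v" and Ym: "Y \<in> borel_measurable M" using g unfolding gaussian_rv_def by auto
  have meas: "{\<omega>\<in>space M. m + sqrt v \<le> Y \<omega>} \<in> sets M" using Ym by measurable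
  have c1: "exp (- 1 / 2) / (2 * sqrt (2 * pi)) \<le> 1"
  proof -
    have "1 \<le> sqrt (2 * pi)" using pi_gt3 by simp
    moreover have "exp (- 1 / 2) \<le> (1::real)" by simp
    ultimately have "exp (- 1 / 2) \<le> 2 * sqrt (2 * pi)" by linarith
    then show ?thesis by (simp add: divide_le_eq)
  qed
  show ?thesis
  proof (cases "v = 0")
    case True
    then have "AE \<omega> in M. Y \<omega> = m" using g unfolding gaussian_rv_def by auto
    then have "AE \<omega> in M. \<omega> \<in> {\<omega>\<in>space M. m + sqrt v \<le> Y \<omega>}" using True
      by (auto simp: AE_iff_measurable)
    then have "measure M {\<omega>\<in>space M. m + sqrt v \<le> Y \<omega>} = 1"
      using prob_eq_1[OF meas] by simp
    then show ?thesis using c1 by simp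
  next
    case False
    define s where "s = sqrt v"
    have s: "0 < s" using False v0 unfolding s_def by simp
    have "distributed M lborel Y (normal_density m s)"
      using g False unfolding gaussian_rv_def s_def by auto
    then have Z: "distributed M lborel (\<lambda>\<omega>. (Y \<omega> - m) / s) std_normal_density"
      using normal_standard_normal_convert[OF s] by simp
    let ?Z = "\<lambda>\<omega>. (Y \<omega> - m) / s"
    have eqs: "{\<omega>\<in>space M. m + sqrt v \<le> Y \<omega>} = ?Z -` {1..} \<inter> space M"
      using s unfolding s_def[symmetric] by (auto simp: field_simps)
    have "ennreal (std_normal_density 1 / 2) \<le> (\<integral>\<^sup>+x. ennreal (std_normal_density x) * indicator {1..} x \<partial>lborel)"
      by (rule std_lower)
    also have "\<dots> = emeasure M (?Z -` {1..} \<inter> space M)"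
      by (rule distributed_emeasure[OF Z, symmetric]) simp
    also have "\<dots> = ennreal (measure M (?Z -` {1..} \<inter> space M))"
      by (simp add: emeasure_eq_measure)
    finally have "std_normal_density 1 / 2 \<le> measure M (?Z -` {1..} \<inter> space M)"
      by (subst (asm) ennreal_le_iff) auto
    then show ?thesis unfolding eqs std_normal_density_def by simp
  qed
qed
theorem lemma4:
  fixes X :: "(real ^ 'd) set"
    and k :: "real ^ 'd \<Rightarrow> real ^ 'd \<Rightarrow> real"
    and s2 :: real and \<delta> :: real and t :: nat
    and xs :: "(real ^ 'd) list" and ys :: "real list"
    and f :: "real ^ 'd \<Rightarrow> real" and xstar :: "real ^ 'd"
    and M :: "'s measure"
    and F :: "'s \<Rightarrow> real ^ 'd \<Rightarrow> real"
    and xt :: "'s \<Rightarrow> real ^ 'd"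
  assumes "finite X" and "X \<noteq> {}" and "X \<subseteq> cball 0 1"
    and "psd_kernel_on X k"
    and "0 < s2" and "0 < \<delta>" and "\<delta> < 1" and "1 \<le> t"
    and "set xs \<subseteq> X" and "length ys = length xs"
    and "xstar \<in> X" and "\<forall>x\<in>X. f x \<le> f xstar"
    \<comment> \<open>event E^f(t)\<close>
    and "\<forall>x\<in>X. \<bar>post_mean k s2 xs ys x - f x\<bar>
                  \<le> beta_t t (card X) \<delta> * post_sd k s2 xs x"
    \<comment> \<open>f_t ~ GP(mu_fb, beta_t^2 sigma_fb^2) given the history\<close>
    and "prob_space M"
    and "gaussian_process_on M X F (post_mean k s2 xs ys)
           (\<lambda>x y. (beta_t t (card X) \<delta>)^2 * post_cov k s2 xs x y)"
    \<comment> \<open>x_t = argmax of f_t over X\<close>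
    and "xt \<in> measurable M (count_space UNIV)"
    and "\<forall>\<omega>\<in>space M. xt \<omega> \<in> X \<and> (\<forall>y\<in>X. F \<omega> y \<le> F \<omega> (xt \<omega>))"
  shows "measure M {\<omega> \<in> space M. xt \<omega> \<in> X - saturated_set X f xstar
                        (c_t t (card X) \<delta>) (post_sd k s2 xs)}
           \<ge> 1 / (4 * exp 1 * sqrt pi) - 1 / (real t)^2"
proof -
  note fin = assms(1) and xstarX = assms(11) and fmax = assms(12) and Ef = assms(13)
  note psp = assms(14) and gp = assms(15) and xtm = assms(16) and xtmax = assms(17)
  interpret P: prob_space M by (rule psp)
  define N where "N = card X"
  define \<beta> where "\<beta> = beta_t t N \<delta>"
  define \<mu> where "\<mu> = post_mean k s2 xs ys"
  define \<sigma> where "\<sigma> = post_sd k s2 xs"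
  define C where "C = post_cov k s2 xs"
  define a where "a = sqrt (2 * ln (real N * real t^2))"
  define p where "p = 1 / (4 * exp 1 * sqrt pi)"
  have N1: "1 \<le> N" using fin assms(2) unfolding N_def by (simp add: Suc_le_eq card_gt_0_iff)
  have p1: "p \<le> 1"
  proof -
    have "1 \<le> sqrt pi" using pi_gt3 by simp
    moreover have "1 \<le> exp (1::real)" by simp
    ultimately have "1 * 1 \<le> exp 1 * sqrt pi"
      by (intro mult_mono) auto
    then have "1 \<le> 4 * exp 1 * sqrt pi" by simp
    then show ?thesis unfolding p_def by simp
  qed
  show ?thesis
  proof (cases "t = 1")
    case True
    then have "p - 1 / (real t)^2 \<le> 0" using p1 by simp
    moreover have "0 \<le> measure M {\<omega> \<in> space M. xt \<omega> \<in> X - saturated_set X f xstar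
                        (c_t t (card X) \<delta>) (post_sd k s2 xs)}" by (rule measure_nonneg)
    ultimately show ?thesis unfolding p_def by linarith
  next
    case False
    then have t2: "2 \<le> t" using assms(8) by simp
    have "3 * \<delta> < pi^2 * real t^2 * real N"
    proof -
      have "3 * 3 \<le> pi * pi" using pi_gt3 by (intro mult_mono) auto
      then have "9 \<le> pi^2" by (simp add: power2_eq_square)
      moreover have "1 * 1 \<le> real t^2 * real N" using t2 N1
        by (intro mult_mono) auto
      ultimately have "9 * 1 \<le> pi^2 * (real t^2 * real N)"
        by (intro mult_mono) auto
      then show ?thesis using assms(7) by (simp add: mult.assoc)
    qed
    then have "1 < pi^2 * real t^2 * real N / (3 * \<delta>)" using assms(6) by simp
    then have bpos: "0 < \<beta>" unfolding \<beta>_def beta_t_def by simp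
    have Ntpos: "4 \<le> real N * real t^2"
    proof -
      have "2 * 2 \<le> real t * real t" using t2 by (intro mult_mono) auto
      then have "4 \<le> real t^2" by (simp add: power2_eq_square)
      then have "1 * 4 \<le> real N * real t^2" using N1 by (intro mult_mono) auto
      then show ?thesis by simp
    qed
    have lnge: "1 \<le> ln (real N * real t^2)"
    proof -
      have "exp 1 \<le> real N * real t^2" using exp_le Ntpos by linarith
      then have "ln (exp 1) \<le> ln (real N * real t^2)"
        using Ntpos by (subst ln_le_cancel_iff) auto
      then show ?thesis by simp
    qed
    have a1: "1 \<le> a" unfolding a_def using lnge by simp
    have expa: "exp (- a\<^sup>2 / 2) = 1 / (real N * real t^2)"
    proof -
      have "a\<^sup>2 = 2 * ln (real N * real t^2)" unfolding a_def using lnge by simp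
      then have "exp (- a\<^sup>2 / 2) = exp (- ln (real N * real t^2))" by simp
      also have "\<dots> = 1 / (real N * real t^2)" using Ntpos by (simp add: exp_minus inverse_eq_divide)
      finally show ?thesis .
    qed
    have marg: "gaussian_rv M (\<lambda>\<omega>. F \<omega> x) (\<mu> x) (\<beta>^2 * C x x)" if xX: "x \<in> X" for x
    proof -
      have "gaussian_rv M (\<lambda>\<omega>. \<Sum>y\<in>X. (if y = x then 1 else 0) * F \<omega> y)
          (\<Sum>y\<in>X. (if y = x then 1 else 0) * \<mu> y)
          (\<Sum>y\<in>X. \<Sum>z\<in>X. (if y = x then 1 else 0) * (if z = x then 1 else 0) * (\<beta>^2 * C y z))"
        using spec[OF gp[unfolded gaussian_process_on_def], of "\<lambda>y. if y = x then (1::real) else 0"]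
        unfolding \<mu>_def \<beta>_def C_def N_def by simp
      moreover have "(\<lambda>\<omega>. \<Sum>y\<in>X. (if y = x then 1 else 0) * F \<omega> y) = (\<lambda>\<omega>. F \<omega> x)"
      proof
        fix \<omega>
        have "(\<Sum>y\<in>X. (if y = x then 1 else 0) * F \<omega> y) = (\<Sum>y\<in>X. if y = x then F \<omega> y else 0)"
          by (intro sum.cong) auto
        also have "\<dots> = F \<omega> x" using fin xX by (simp add: sum.delta)
        finally show "(\<Sum>y\<in>X. (if y = x then 1 else 0) * F \<omega> y) = F \<omega> x" .
      qed
      moreover have "(\<Sum>y\<in>X. (if y = x then 1 else 0) * \<mu> y) = \<mu> x"
      proof -
        have "(\<Sum>y\<in>X. (if y = x then 1 else 0) * \<mu> y) = (\<Sum>y\<in>X. if y = x then \<mu> y else 0)"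
          by (intro sum.cong) auto
        also have "\<dots> = \<mu> x" using fin xX by (simp add: sum.delta)
        finally show ?thesis .
      qed
      moreover have "(\<Sum>y\<in>X. \<Sum>z\<in>X. (if y = x then 1 else 0) * (if z = x then 1 else 0) * (\<beta>^2 * C y z)) = \<beta>^2 * C x x"
      proof -
        have "(\<Sum>y\<in>X. \<Sum>z\<in>X. (if y = x then 1 else 0) * (if z = x then 1 else 0) * (\<beta>^2 * C y z))
           = (\<Sum>y\<in>X. if y = x then (\<Sum>z\<in>X. if z = x then \<beta>^2 * C y z else 0) else 0)"
        proof (intro sum.cong refl)
          fix y show "(\<Sum>z\<in>X. (if y = x then 1 else 0) * (if z = x then 1 else 0) * (\<beta>^2 * C y z))
             = (if y = x then (\<Sum>z\<in>X. if z = x then \<beta>^2 * C y z else 0) else 0)"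
            by (cases "y = x") (auto intro: sum.cong)
        qed
        also have "\<dots> = \<beta>^2 * C x x" using fin xX by (simp add: sum.delta)
        finally show ?thesis .
      qed
      ultimately show ?thesis by simp
    qed
    have Cnn: "0 \<le> C x x" if "x \<in> X" for x
    proof -
      have "0 \<le> \<beta>^2 * C x x" using marg[OF that] unfolding gaussian_rv_def by simp
      then show ?thesis using bpos by (simp add: zero_le_mult_iff)
    qed
    have sq: "sqrt (\<beta>^2 * C x x) = \<beta> * \<sigma> x" if "x \<in> X" for x
      using bpos unfolding \<sigma>_def post_sd_def C_def by (simp add: real_sqrt_mult)
    have Fm: "(\<lambda>\<omega>. F \<omega> x) \<in> borel_measurable M" if "x \<in> X" for x
      using marg[OF that] unfolding gaussian_rv_def by simp
    define A where "A = {\<omega>\<in>space M. \<mu> xstar + sqrt (\<beta>^2 * C xstar xstar) \<le> F \<omega> xstar}"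
    define B where "B x = {\<omega>\<in>space M. \<mu> x + a * sqrt (\<beta>^2 * C x x) < F \<omega> x}" for x
    define T where "T = {\<omega> \<in> space M. xt \<omega> \<in> X - saturated_set X f xstar
                        (c_t t (card X) \<delta>) (post_sd k s2 xs)}"
    have PA: "exp (- 1 / 2) / (2 * sqrt (2 * pi)) \<le> measure M A"
      unfolding A_def by (rule P.gauss_lower[OF marg[OF xstarX]])
    have PB: "measure M (B x) \<le> 1 / (real N * real t^2)" if "x \<in> X" for x
      unfolding B_def expa[symmetric] by (rule P.gauss_upper[OF marg[OF that] a1])
    have Asets: "A \<in> sets M" unfolding A_def using Fm[OF xstarX] by measurable
    have Bsets: "B x \<in> sets M" if "x \<in> X" for x unfolding B_def using Fm[OF that] by measurable
    have Tsets: "T \<in> sets M"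
    proof -
      have "xt -` (X - saturated_set X f xstar (c_t t (card X) \<delta>) (post_sd k s2 xs)) \<inter> space M \<in> sets M"
        by (rule measurable_sets[OF xtm]) simp
      moreover have "T = xt -` (X - saturated_set X f xstar (c_t t (card X) \<delta>) (post_sd k s2 xs)) \<inter> space M"
        unfolding T_def by auto
      ultimately show ?thesis by simp
    qed
    have cdef: "c_t t (card X) \<delta> = \<beta> * (1 + a)"
      unfolding c_t_def \<beta>_def a_def N_def by simp
    have sub: "A \<subseteq> T \<union> (\<Union>x\<in>X. B x)"
    proof
      fix \<omega> assume \<omega>A: "\<omega> \<in> A"
      show "\<omega> \<in> T \<union> (\<Union>x\<in>X. B x)"
      proof (cases "\<exists>x\<in>X. \<omega> \<in> B x")
        case True then show ?thesis by auto
      next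
        case False
        have \<omega>s: "\<omega> \<in> space M" using \<omega>A unfolding A_def by auto
        define y where "y = xt \<omega>"
        have yX: "y \<in> X" and Fy: "F \<omega> xstar \<le> F \<omega> y"
          using xtmax \<omega>s xstarX unfolding y_def by auto
        have "\<omega> \<notin> B y" using False yX by auto
        then have h1: "F \<omega> y \<le> \<mu> y + a * (\<beta> * \<sigma> y)" using \<omega>s sq[OF yX] unfolding B_def by auto
        have h2: "\<mu> xstar + \<beta> * \<sigma> xstar \<le> F \<omega> xstar" using \<omega>A sq[OF xstarX] unfolding A_def by auto
        have h3: "\<bar>\<mu> y - f y\<bar> \<le> \<beta> * \<sigma> y" using Ef yX unfolding \<mu>_def \<beta>_def \<sigma>_def N_def by auto
        have h4: "\<bar>\<mu> xstar - f xstar\<bar> \<le> \<beta> * \<sigma> xstar" using Ef xstarX unfolding \<mu>_def \<beta>_def \<sigma>_def N_def by auto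
        have "f xstar - f y \<le> \<beta> * (1 + a) * \<sigma> y"
          using h1 h2 h3 h4 Fy by (simp add: algebra_simps abs_le_iff)
        then have "y \<notin> saturated_set X f xstar (c_t t (card X) \<delta>) (post_sd k s2 xs)"
          unfolding saturated_set_def cdef \<sigma>_def by auto
        then have "\<omega> \<in> T" unfolding T_def using \<omega>s yX y_def by auto
        then show ?thesis by simp
      qed
    qed
    have "measure M A \<le> measure M (T \<union> (\<Union>x\<in>X. B x))"
      using sub Tsets Bsets fin by (intro P.finite_measure_mono) auto
    also have "\<dots> \<le> measure M T + measure M (\<Union>x\<in>X. B x)"
      using Tsets Bsets fin by (intro measure_Un_le) auto
    also have "measure M (\<Union>x\<in>X. B x) \<le> (\<Sum>x\<in>X. measure M (B x))"
      using Bsets fin by (intro measure_UNION_le) auto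
    also have "\<dots> \<le> (\<Sum>x\<in>X. 1 / (real N * real t^2))"
      using PB by (intro sum_mono) auto
    also have "\<dots> = 1 / (real t)^2"
      using N1 unfolding N_def by simp
    finally have "measure M A - 1 / (real t)^2 \<le> measure M T" by simp
    moreover have "p \<le> exp (- 1 / 2) / (2 * sqrt (2 * pi))"
    proof -
      have e: "1 \<le> exp (- 1 / 2) * exp (1::real)" by (simp add: mult_exp_exp)
      have r2: "sqrt 2 \<le> (2::real)" using real_sqrt_le_mono[of 2 "2^2"] by simp
      have sp: "0 < sqrt pi" by simp
      have "2 * sqrt 2 * sqrt pi \<le> 4 * (exp (- 1 / 2) * exp 1) * sqrt pi"
      proof -
        have "2 * sqrt 2 \<le> 4 * (exp (- 1 / 2) * exp (1::real))" using e r2 by linarith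
        then show ?thesis using sp by (intro mult_right_mono) auto
      qed
      then show ?thesis unfolding p_def using sp
        by (simp add: real_sqrt_mult field_simps)
    qed
    ultimately show ?thesis using PA unfolding T_def p_def by linarith
  qed
qed

end
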